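(* Let $\mathcal{H}$ be a finite-dimensional complex Hilbert space and let $V_1, \dots, V_n$ be linear operators on $\mathcal{H}$ that mutually commute, i.e. $V_\alpha V_\beta = V_\beta V_\alpha$ for all $\alpha, \beta \in \{1,\dots,n\}$. Suppose that $$\sum_{\alpha=1}^n V_\alpha^* V_\alpha = \mathrm{Id}.$$ Then each $V_\alpha$ is normal, i.e. $V_\alpha V_\alpha^* = V_\alpha^* V_\alpha$. In particular, $V_1,\dots,V_n$ are simultaneously diagonalizable: there exists an orthonormal basis of $\mathcal{H}$ consisting of joint eigenvectors of all $V_\alpha$.
   Context: $V^*$ denotes the Hermitian adjoint of $V$. *)

theory Defs
  imports "Jordan_Normal_Form.Schur_Decomposition"
begin

text \<open>Operators on a d-dimensional complex Hilbert space are represented as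
  d x d complex matrices (w.r.t. an orthonormal basis); the Hermitian adjoint
  is the conjugate transpose mat_adjoint.\<close>

definition mat_sum :: "nat \<Rightarrow> (nat \<Rightarrow> complex mat) \<Rightarrow> nat \<Rightarrow> complex mat" where
  "mat_sum d V n = foldr (\<lambda>a B. V a + B) [0..<n] (0\<^sub>m d d)"

text \<open>An orthonormal basis of C^d: d vectors of dimension d, orthonormal
  w.r.t. the standard Hermitian inner product (d orthonormal vectors in a
  d-dimensional space automatically span it).\<close>
definition orthonormal_basis :: "nat \<Rightarrow> complex vec list \<Rightarrow> bool" where
  "orthonormal_basis d us \<longleftrightarrow> length us = d \<and> (\<forall>u\<in>set us. u \<in> carrier_vec d) \<and>
     (\<forall>i<d. \<forall>j<d. (us ! i) \<bullet>c (us ! j) = (if i = j then 1 else 0))"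

definition is_eigenvector :: "complex mat \<Rightarrow> complex vec \<Rightarrow> bool" where
  "is_eigenvector A u \<longleftrightarrow> u \<noteq> 0\<^sub>v (dim_vec u) \<and> (\<exists>c. A *\<^sub>v u = c \<cdot>\<^sub>v u)"

end

theory Submission imports Defs "Jordan_Normal_Form.Spectral_Radius" "Jordan_Normal_Form.Matrix_Kernel" begin

lemma adj_carrier: "A \<in> carrier_mat n n \<Longrightarrow> mat_adjoint A \<in> carrier_mat n n"
  unfolding mat_adjoint_def by auto

lemma adj_index: "A \<in> carrier_mat n n \<Longrightarrow> i < n \<Longrightarrow> j < n \<Longrightarrow> mat_adjoint A $$ (i,j) = cnj (A $$ (j,i))"
  unfolding mat_adjoint_def by (auto simp: mat_of_rows_def)

lemma adj_adj: "A \<in> carrier_mat n n \<Longrightarrow> mat_adjoint (mat_adjoint (A::complex mat)) = A"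
proof -
  assume A: "A \<in> carrier_mat n n"
  have B: "mat_adjoint A \<in> carrier_mat n n" using adj_carrier[OF A] .
  show ?thesis
    by (rule eq_matI, insert A B adj_carrier[OF B], auto simp: adj_index[OF B] adj_index[OF A])
qed

lemma adj_ip:
  fixes A :: "complex mat"
  assumes A: "A \<in> carrier_mat n n" and x: "x \<in> carrier_vec n" and y: "y \<in> carrier_vec n"
  shows "(A *\<^sub>v x) \<bullet>c y = x \<bullet>c (mat_adjoint A *\<^sub>v y)"
proof -
  have "(A *\<^sub>v x) \<bullet>c y = (\<Sum>i<n. (\<Sum>j<n. A $$ (i,j) * x $ j) * cnj (y $ i))"
    using A x y by (auto simp: scalar_prod_def mult_mat_vec_def row_def atLeast0LessThan)
  also have "\<dots> = (\<Sum>i<n. \<Sum>j<n. A $$ (i,j) * x $ j * cnj (y $ i))"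
    by (simp add: sum_distrib_right)
  also have "\<dots> = (\<Sum>j<n. \<Sum>i<n. A $$ (i,j) * x $ j * cnj (y $ i))"
    by (rule sum.swap)
  also have "\<dots> = (\<Sum>j<n. x $ j * cnj (\<Sum>i<n. cnj (A $$ (i,j)) * y $ i))"
    by (simp add: sum_distrib_left mult_ac)
  also have "\<dots> = x \<bullet>c (mat_adjoint A *\<^sub>v y)"
    using A x y adj_carrier[OF A]
    by (auto simp: scalar_prod_def mult_mat_vec_def row_def atLeast0LessThan adj_index)
  finally show ?thesis .
qed

lemma ip_smult_l: fixes x y :: "complex vec"
  assumes "x \<in> carrier_vec n" "y \<in> carrier_vec n"
  shows "(c \<cdot>\<^sub>v x) \<bullet>c y = c * (x \<bullet>c y)"
  by (metis assms carrier_vec_conjugate smult_scalar_prod_distrib)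

lemma ip_smult_r: fixes x y :: "complex vec"
  assumes "x \<in> carrier_vec n" "y \<in> carrier_vec n"
  shows "x \<bullet>c (c \<cdot>\<^sub>v y) = cnj c * (x \<bullet>c y)"
  proof -
  have "conjugate (c \<cdot>\<^sub>v y) = cnj c \<cdot>\<^sub>v conjugate y" by (simp add: conjugate_smult_vec)
  thus ?thesis using assms by (simp add: scalar_prod_smult_distrib[of _ n])
qed

lemma ip_cnj: fixes x y :: "complex vec"
  assumes "x \<in> carrier_vec n" "y \<in> carrier_vec n"
  shows "cnj (x \<bullet>c y) = y \<bullet>c x"
  proof -
  have "cnj (x \<bullet>c y) = conjugate x \<bullet> conjugate (conjugate y)"
    using conjugate_sprod_vec[of x n "conjugate y"] assms by simp
  also have "\<dots> = y \<bullet>c x" using assms by (simp add: comm_scalar_prod[of _ n])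
  finally show ?thesis .
qed

lemma ip_diff: fixes x y :: "complex vec"
  assumes "x \<in> carrier_vec n" "y \<in> carrier_vec n"
  shows "(x - y) \<bullet>c (x - y) = x \<bullet>c x - x \<bullet>c y - y \<bullet>c x + y \<bullet>c y"
  proof -
  have "(x - y) \<bullet>c (x - y) = (\<Sum>i<n. (x$i - y$i) * (cnj (x$i) - cnj (y$i)))"
    using assms by (simp add: scalar_prod_def atLeast0LessThan)
  also have "\<dots> = (\<Sum>i<n. x$i * cnj (x$i) - x$i * cnj (y$i) - y$i * cnj (x$i) + y$i * cnj (y$i))"
    by (rule sum.cong, auto simp: algebra_simps)
  also have "\<dots> = x \<bullet>c x - x \<bullet>c y - y \<bullet>c x + y \<bullet>c y"
    using assms by (simp add: scalar_prod_def atLeast0LessThan sum_subtractf sum.distrib)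
  finally show ?thesis .
qed

lemma vec_minus_zero: fixes x y :: "complex vec"
  assumes x: "x \<in> carrier_vec n" and y: "y \<in> carrier_vec n" and "x - y = 0\<^sub>v n"
  shows "x = y"
proof -
  have "x = (x - y) + y" using x y by auto
  also have "\<dots> = y" using assms by auto
  finally show ?thesis .
qed

lemma foldr_sum:
  fixes F :: "nat \<Rightarrow> complex mat"
  assumes "\<forall>a\<in>set xs. F a \<in> carrier_mat d d"
  shows "foldr (\<lambda>a B. F a + B) xs (0\<^sub>m d d) \<in> carrier_mat d d \<and>
    (\<forall>x\<in>carrier_vec d. \<forall>z\<in>carrier_vec d. (foldr (\<lambda>a B. F a + B) xs (0\<^sub>m d d) *\<^sub>v x) \<bullet>c z
       = sum_list (map (\<lambda>a. (F a *\<^sub>v x) \<bullet>c z) xs))"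
  using assms
proof (induction xs)
  case Nil
  have "\<And>x. x \<in> carrier_vec d \<Longrightarrow> 0\<^sub>m d d *\<^sub>v x = (0\<^sub>v d :: complex vec)"
    by (rule eq_vecI, auto simp: scalar_prod_def)
  then show ?case by auto
next
  case (Cons a xs)
  let ?B = "foldr (\<lambda>a B. F a + B) xs (0\<^sub>m d d)"
  from Cons have B: "?B \<in> carrier_mat d d" and Fa: "F a \<in> carrier_mat d d" by auto
  from Cons have IH: "\<forall>x\<in>carrier_vec d. \<forall>z\<in>carrier_vec d. (?B *\<^sub>v x) \<bullet>c z
       = sum_list (map (\<lambda>a. (F a *\<^sub>v x) \<bullet>c z) xs)" by auto
  show ?case
  proof (intro conjI ballI)
    show "foldr (\<lambda>a B. F a + B) (a # xs) (0\<^sub>m d d) \<in> carrier_mat d d" using B Fa by simp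
    fix x z :: "complex vec" assume x: "x \<in> carrier_vec d" and z: "z \<in> carrier_vec d"
    have "(foldr (\<lambda>a B. F a + B) (a # xs) (0\<^sub>m d d) *\<^sub>v x) \<bullet>c z = ((F a *\<^sub>v x) + (?B *\<^sub>v x)) \<bullet>c z"
      using add_mult_distrib_mat_vec[OF Fa B x] by simp
    also have "\<dots> = (F a *\<^sub>v x) \<bullet>c z + (?B *\<^sub>v x) \<bullet>c z"
      by (rule add_scalar_prod_distrib[of _ d], insert Fa B x z, auto)
    finally show "(foldr (\<lambda>a B. F a + B) (a # xs) (0\<^sub>m d d) *\<^sub>v x) \<bullet>c z =
         sum_list (map (\<lambda>a. (F a *\<^sub>v x) \<bullet>c z) (a # xs))" using IH x z by simp
  qed
qed

lemma iso:
  fixes V :: "nat \<Rightarrow> complex mat"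
  assumes dims: "\<And>\<alpha>. \<alpha> < n \<Longrightarrow> V \<alpha> \<in> carrier_mat d d"
    and sum_id: "mat_sum d (\<lambda>\<alpha>. mat_adjoint (V \<alpha>) * V \<alpha>) n = 1\<^sub>m d"
    and x: "x \<in> carrier_vec d" and z: "z \<in> carrier_vec d"
  shows "(\<Sum>\<beta><n. (V \<beta> *\<^sub>v x) \<bullet>c (V \<beta> *\<^sub>v z)) = x \<bullet>c z"
proof -
  have F: "\<forall>a\<in>set [0..<n]. mat_adjoint (V a) * V a \<in> carrier_mat d d"
  proof
    fix a assume "a \<in> set [0..<n]"
    hence a: "a < n" by auto
    show "mat_adjoint (V a) * V a \<in> carrier_mat d d"
      using mult_carrier_mat[OF adj_carrier[OF dims[OF a]] dims[OF a]] .
  qed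
  have "x \<bullet>c z = (mat_sum d (\<lambda>\<alpha>. mat_adjoint (V \<alpha>) * V \<alpha>) n *\<^sub>v x) \<bullet>c z"
    unfolding sum_id using x by simp
  also have "\<dots> = sum_list (map (\<lambda>a. ((mat_adjoint (V a) * V a) *\<^sub>v x) \<bullet>c z) [0..<n])"
    using conjunct2[OF foldr_sum[OF F]] x z unfolding mat_sum_def by blast
  also have "\<dots> = (\<Sum>a<n. ((mat_adjoint (V a) * V a) *\<^sub>v x) \<bullet>c z)"
    unfolding interv_sum_list_conv_sum_set_nat set_upt atLeast0LessThan ..
  also have "\<dots> = (\<Sum>\<beta><n. (V \<beta> *\<^sub>v x) \<bullet>c (V \<beta> *\<^sub>v z))"
  proof (rule sum.cong)
    fix b assume "b \<in> {..<n}"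
    hence Vb: "V b \<in> carrier_mat d d" using dims by auto
    have "((mat_adjoint (V b) * V b) *\<^sub>v x) \<bullet>c z = (mat_adjoint (V b) *\<^sub>v (V b *\<^sub>v x)) \<bullet>c z"
      using assoc_mult_mat_vec[OF adj_carrier[OF Vb] Vb x] by simp
    also have "\<dots> = (V b *\<^sub>v x) \<bullet>c (mat_adjoint (mat_adjoint (V b)) *\<^sub>v z)"
      by (rule adj_ip[OF adj_carrier[OF Vb]], insert Vb x z, auto)
    also have "\<dots> = (V b *\<^sub>v x) \<bullet>c (V b *\<^sub>v z)" using adj_adj[OF Vb] by simp
    finally show "((mat_adjoint (V b) * V b) *\<^sub>v x) \<bullet>c z = (V b *\<^sub>v x) \<bullet>c (V b *\<^sub>v z)" .
  qed simp
  finally show ?thesis by simp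
qed


lemma key:
  fixes V :: "nat \<Rightarrow> complex mat" and lam :: "nat \<Rightarrow> complex"
  assumes dims: "\<And>\<alpha>. \<alpha> < n \<Longrightarrow> V \<alpha> \<in> carrier_mat d d"
    and comm: "\<And>\<alpha> \<beta>. \<alpha> < n \<Longrightarrow> \<beta> < n \<Longrightarrow> V \<alpha> * V \<beta> = V \<beta> * V \<alpha>"
    and iso: "\<And>x z. x \<in> carrier_vec d \<Longrightarrow> z \<in> carrier_vec d \<Longrightarrow> (\<Sum>\<beta><n. (V \<beta> *\<^sub>v x) \<bullet>c (V \<beta> *\<^sub>v z)) = x \<bullet>c z"
    and e: "e \<in> carrier_vec d" and e0: "e \<noteq> 0\<^sub>v d"
    and ev: "\<And>\<beta>. \<beta> < n \<Longrightarrow> V \<beta> *\<^sub>v e = lam \<beta> \<cdot>\<^sub>v e"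
    and a: "\<alpha> < n"
  shows "mat_adjoint (V \<alpha>) *\<^sub>v e = cnj (lam \<alpha>) \<cdot>\<^sub>v e"
proof -
  have sm: "\<And>c v. v \<in> carrier_vec d \<Longrightarrow> (c::complex) \<cdot>\<^sub>v v \<in> carrier_vec d" by auto
  define E where "E = e \<bullet>c e"
  have E0: "E \<noteq> 0" using e e0 by (simp add: E_def)
  have Ecnj: "cnj E = E" using ip_cnj[OF e e] E_def by simp
  have lam1: "(\<Sum>\<beta><n. lam \<beta> * cnj (lam \<beta>)) = 1"
  proof -
    have "E = (\<Sum>\<beta><n. (V \<beta> *\<^sub>v e) \<bullet>c (V \<beta> *\<^sub>v e))" using iso[OF e e] E_def by simp
    also have "\<dots> = (\<Sum>\<beta><n. lam \<beta> * cnj (lam \<beta>) * E)"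
    proof (rule sum.cong)
      fix b assume "b \<in> {..<n}"
      hence b: "b < n" by auto
      show "(V b *\<^sub>v e) \<bullet>c (V b *\<^sub>v e) = lam b * cnj (lam b) * E"
        unfolding ev[OF b] ip_smult_l[OF e sm[OF e]] ip_smult_r[OF e e] E_def by simp
    qed simp
    also have "\<dots> = (\<Sum>\<beta><n. lam \<beta> * cnj (lam \<beta>)) * E" by (simp add: sum_distrib_right)
    finally show ?thesis using E0 by simp
  qed
  define A where "A = V \<alpha>"
  have A: "A \<in> carrier_mat d d" using dims[OF a] A_def by simp
  define y where "y = mat_adjoint A *\<^sub>v e"
  have y: "y \<in> carrier_vec d" using y_def adj_carrier[OF A] e by simp
  have adjr: "\<And>w. w \<in> carrier_vec d \<Longrightarrow> w \<bullet>c y = (A *\<^sub>v w) \<bullet>c e"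
    using adj_ip[OF A _ e] y_def by simp
  have Vc: "\<And>b. b < n \<Longrightarrow> V b *\<^sub>v y \<in> carrier_vec d" using dims y mult_mat_vec_carrier by blast
  have T1: "(\<Sum>\<beta><n. (V \<beta> *\<^sub>v y) \<bullet>c (V \<beta> *\<^sub>v y)) = y \<bullet>c y" by (rule iso[OF y y])
  have T2t: "(V b *\<^sub>v y) \<bullet>c (lam b \<cdot>\<^sub>v y) = (V b *\<^sub>v (A *\<^sub>v y)) \<bullet>c (V b *\<^sub>v e)" if b: "b < n" for b
  proof -
    have Vb: "V b \<in> carrier_mat d d" using dims[OF b] .
    have Ay: "A *\<^sub>v y \<in> carrier_vec d" using A y by simp
    have c: "A *\<^sub>v (V b *\<^sub>v y) = V b *\<^sub>v (A *\<^sub>v y)"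
      using assoc_mult_mat_vec[OF A Vb y] assoc_mult_mat_vec[OF Vb A y] comm[OF a b] A_def by simp
    have "(V b *\<^sub>v y) \<bullet>c (lam b \<cdot>\<^sub>v y) = cnj (lam b) * ((V b *\<^sub>v y) \<bullet>c y)"
      by (rule ip_smult_r[OF Vc[OF b] y])
    also have "\<dots> = cnj (lam b) * ((V b *\<^sub>v (A *\<^sub>v y)) \<bullet>c e)" using adjr[OF Vc[OF b]] c by simp
    also have "\<dots> = (V b *\<^sub>v (A *\<^sub>v y)) \<bullet>c (V b *\<^sub>v e)"
      unfolding ev[OF b] using ip_smult_r[OF _ e] Vb Ay by simp
    finally show ?thesis .
  qed
  have T2: "(\<Sum>\<beta><n. (V \<beta> *\<^sub>v y) \<bullet>c (lam \<beta> \<cdot>\<^sub>v y)) = y \<bullet>c y"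
  proof -
    have "(\<Sum>\<beta><n. (V \<beta> *\<^sub>v y) \<bullet>c (lam \<beta> \<cdot>\<^sub>v y)) = (\<Sum>\<beta><n. (V \<beta> *\<^sub>v (A *\<^sub>v y)) \<bullet>c (V \<beta> *\<^sub>v e))"
      by (rule sum.cong, auto simp: T2t)
    also have "\<dots> = (A *\<^sub>v y) \<bullet>c e" using iso[OF _ e, of "A *\<^sub>v y"] A y by simp
    also have "\<dots> = y \<bullet>c y" using adjr[OF y] by simp
    finally show ?thesis .
  qed
  have T3: "(\<Sum>\<beta><n. (lam \<beta> \<cdot>\<^sub>v y) \<bullet>c (V \<beta> *\<^sub>v y)) = y \<bullet>c y"
  proof -
    have "(\<Sum>\<beta><n. (lam \<beta> \<cdot>\<^sub>v y) \<bullet>c (V \<beta> *\<^sub>v y)) = (\<Sum>\<beta><n. cnj ((V \<beta> *\<^sub>v y) \<bullet>c (lam \<beta> \<cdot>\<^sub>v y)))"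
      by (rule sum.cong, auto simp: ip_cnj[OF Vc sm[OF y]])
    also have "\<dots> = cnj (y \<bullet>c y)" unfolding cnj_sum[symmetric] T2 ..
    also have "\<dots> = y \<bullet>c y" using ip_cnj[OF y y] .
    finally show ?thesis .
  qed
  have T4: "(\<Sum>\<beta><n. (lam \<beta> \<cdot>\<^sub>v y) \<bullet>c (lam \<beta> \<cdot>\<^sub>v y)) = y \<bullet>c y"
  proof -
    have "(\<Sum>\<beta><n. (lam \<beta> \<cdot>\<^sub>v y) \<bullet>c (lam \<beta> \<cdot>\<^sub>v y)) = (\<Sum>\<beta><n. lam \<beta> * cnj (lam \<beta>) * (y \<bullet>c y))"
      by (rule sum.cong, auto simp: ip_smult_l[OF y sm[OF y]] ip_smult_r[OF y y])
    also have "\<dots> = y \<bullet>c y" unfolding sum_distrib_right[symmetric] lam1 by simp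
    finally show ?thesis .
  qed
  have Q: "(\<Sum>\<beta><n. (V \<beta> *\<^sub>v y - lam \<beta> \<cdot>\<^sub>v y) \<bullet>c (V \<beta> *\<^sub>v y - lam \<beta> \<cdot>\<^sub>v y)) = 0"
  proof -
    have "(\<Sum>\<beta><n. (V \<beta> *\<^sub>v y - lam \<beta> \<cdot>\<^sub>v y) \<bullet>c (V \<beta> *\<^sub>v y - lam \<beta> \<cdot>\<^sub>v y))
      = (\<Sum>\<beta><n. (V \<beta> *\<^sub>v y) \<bullet>c (V \<beta> *\<^sub>v y) - (V \<beta> *\<^sub>v y) \<bullet>c (lam \<beta> \<cdot>\<^sub>v y)
           - (lam \<beta> \<cdot>\<^sub>v y) \<bullet>c (V \<beta> *\<^sub>v y) + (lam \<beta> \<cdot>\<^sub>v y) \<bullet>c (lam \<beta> \<cdot>\<^sub>v y))"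
      by (rule sum.cong, auto simp: ip_diff[OF Vc sm[OF y]])
    also have "\<dots> = 0" unfolding sum.distrib sum_subtractf T1 T2 T3 T4 by simp
    finally show ?thesis .
  qed
  have "(A *\<^sub>v y - lam \<alpha> \<cdot>\<^sub>v y) \<bullet>c (A *\<^sub>v y - lam \<alpha> \<cdot>\<^sub>v y) = 0"
    using Q sum_nonneg_eq_0_iff[of "{..<n}" "\<lambda>\<beta>. (V \<beta> *\<^sub>v y - lam \<beta> \<cdot>\<^sub>v y) \<bullet>c (V \<beta> *\<^sub>v y - lam \<beta> \<cdot>\<^sub>v y)"]
      a A_def by auto
  moreover have "A *\<^sub>v y - lam \<alpha> \<cdot>\<^sub>v y \<in> carrier_vec d" using A y by simp
  ultimately have "A *\<^sub>v y - lam \<alpha> \<cdot>\<^sub>v y = 0\<^sub>v d" using conjugate_square_eq_0_vec by blast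
  hence Ay: "A *\<^sub>v y = lam \<alpha> \<cdot>\<^sub>v y" using vec_minus_zero[OF mult_mat_vec_carrier[OF A y] sm[OF y]] by blast
  have ey: "e \<bullet>c y = lam \<alpha> * E" using adjr[OF e] ev[OF a] A_def ip_smult_l[OF e e] E_def by simp
  have ye: "y \<bullet>c e = cnj (lam \<alpha>) * E" using ip_cnj[OF e y] ey Ecnj by simp
  have yy: "y \<bullet>c y = lam \<alpha> * (y \<bullet>c e)" using adjr[OF y] Ay ip_smult_l[OF y e] by simp
  have "(y - cnj (lam \<alpha>) \<cdot>\<^sub>v e) \<bullet>c (y - cnj (lam \<alpha>) \<cdot>\<^sub>v e) = 0"
    unfolding ip_diff[OF y sm[OF e]] ip_smult_r[OF y e] ip_smult_l[OF e y] ip_smult_l[OF e sm[OF e]]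
      ip_smult_r[OF e e] yy ye ey E_def[symmetric] by (simp add: algebra_simps)
  moreover have "y - cnj (lam \<alpha>) \<cdot>\<^sub>v e \<in> carrier_vec d" using y e by simp
  ultimately have "y - cnj (lam \<alpha>) \<cdot>\<^sub>v e = 0\<^sub>v d" using conjugate_square_eq_0_vec by blast
  hence "y = cnj (lam \<alpha>) \<cdot>\<^sub>v e" by (rule vec_minus_zero[OF y sm[OF e]])
  thus ?thesis unfolding y_def A_def .
qed


lemma kb:
  fixes M :: "complex mat"
  assumes M: "M \<in> carrier_mat r m"
  shows "\<exists>s P L. P \<in> carrier_mat m s \<and> L \<in> carrier_mat s m \<and> L * P = 1\<^sub>m s
     \<and> (\<forall>c\<in>carrier_vec s. M *\<^sub>v (P *\<^sub>v c) = 0\<^sub>v r)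
     \<and> (\<forall>v\<in>carrier_vec m. M *\<^sub>v v = 0\<^sub>v r \<longrightarrow> P *\<^sub>v (L *\<^sub>v v) = v)"
proof -
  interpret K: kernel r m M by (unfold_locales, rule M)
  obtain B where fin: "finite B" and bas: "K.basis B"
    using kernel_basis_exists[OF M] by blast
  interpret cof_vec_space m "TYPE(complex)" .
  from bas have Bk: "B \<subseteq> mat_kernel M" and indep: "\<not> K.Ker.lin_dep B" and sp: "K.Ker.span B = mat_kernel M"
    unfolding K.Ker.basis_def by auto
  have Bc: "B \<subseteq> carrier_vec m" using Bk mat_kernel_carrier[OF M] by auto
  have indep': "\<not> K.NC.lin_dep B" using indep K.lindep_same[OF Bk] by simp
  have sp': "K.NC.span B = mat_kernel M" using sp K.span_same[OF Bk] by simp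
  obtain ws where ws: "set ws = B" "distinct ws" using finite_distinct_list[OF fin] by blast
  define us where "us = gram_schmidt m ws"
  from gram_schmidt_result[of ws, OF _ ws(2) _ us_def] ws Bc indep'
  have r1: "K.NC.span (set ws) = K.NC.span (set us)" and orth: "corthogonal us"
    and usc: "set us \<subseteq> carrier_vec m" by auto
  define s where "s = length us"
  define P where "P = mat_of_cols m us"
  define L where "L = mat_of_rows m (map vec_inv us)"
  have P: "P \<in> carrier_mat m s" unfolding P_def s_def by simp
  have L: "L \<in> carrier_mat s m" unfolding L_def s_def using mat_of_rows_carrier(1)[of m "map vec_inv us"] by simp
  have LP: "L * P = 1\<^sub>m s"
    using corthogonal_inv[OF orth usc] L unfolding inverts_mat_def L_def P_def s_def by simp
  have spk: "K.NC.span (set us) = mat_kernel M" using r1 sp' ws by simp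
  have dimus: "\<forall>w\<in>set us. dim_vec w = m" using usc by auto
  have Pin: "P *\<^sub>v c \<in> mat_kernel M" if c: "c \<in> carrier_vec s" for c
  proof -
    have "c = vec (length us) (\<lambda>i. c $ i)" using c s_def by auto
    hence "P *\<^sub>v c = K.NC.lincomb_list (\<lambda>i. c $ i) us"
      using K.NC.lincomb_list_as_mat_mult[OF dimus] P_def by simp
    also have "\<dots> \<in> K.NC.span_list us" unfolding K.NC.span_list_def by auto
    also have "K.NC.span_list us = K.NC.span (set us)" by (rule K.NC.span_list_as_span[OF usc])
    finally show ?thesis using spk by simp
  qed
  show ?thesis
  proof (intro exI conjI ballI impI)
    show "P \<in> carrier_mat m s" "L \<in> carrier_mat s m" "L * P = 1\<^sub>m s" by fact+
    fix c :: "complex vec" assume "c \<in> carrier_vec s"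
    from Pin[OF this] show "M *\<^sub>v (P *\<^sub>v c) = 0\<^sub>v r" using mat_kernelD[OF M] by blast
  next
    fix v :: "complex vec" assume v: "v \<in> carrier_vec m" and Mv: "M *\<^sub>v v = 0\<^sub>v r"
    have "v \<in> mat_kernel M" by (rule mat_kernelI[OF M v Mv])
    hence "v \<in> K.NC.span_list us" using spk K.NC.span_list_as_span[OF usc] by simp
    then obtain lc where vl: "v = K.NC.lincomb_list lc us" by (metis K.NC.in_span_listE)
    define c where "c = vec s lc"
    have c: "c \<in> carrier_vec s" unfolding c_def by simp
    have vP: "v = P *\<^sub>v c" using vl K.NC.lincomb_list_as_mat_mult[OF dimus] P_def c_def s_def by simp
    have "P *\<^sub>v (L *\<^sub>v (P *\<^sub>v c)) = P *\<^sub>v ((L * P) *\<^sub>v c)"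
      using assoc_mult_mat_vec[OF L P c] by simp
    also have "\<dots> = P *\<^sub>v c" using LP c by simp
    finally show "P *\<^sub>v (L *\<^sub>v v) = v" using vP by simp
  qed
qed


lemma mat_eq_vec:
  fixes X Y :: "complex mat"
  assumes X: "X \<in> carrier_mat a b" and Y: "Y \<in> carrier_mat a b"
    and eq: "\<And>c. c \<in> carrier_vec b \<Longrightarrow> X *\<^sub>v c = Y *\<^sub>v c"
  shows "X = Y"
proof (rule eq_matI)
  fix i j assume i: "i < dim_row Y" and j: "j < dim_col Y"
  have u: "unit_vec b j \<in> carrier_vec b" by simp
  have "X $$ (i,j) = (X *\<^sub>v unit_vec b j) $ i"
    using X Y i j by (simp add: scalar_prod_right_unit)
  also have "\<dots> = (Y *\<^sub>v unit_vec b j) $ i" using eq[OF u] by simp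
  also have "\<dots> = Y $$ (i,j)" using X Y i j by (simp add: scalar_prod_right_unit)
  finally show "X $$ (i,j) = Y $$ (i,j)" .
qed (insert X Y, auto)

lemma restrict:
  fixes A :: "nat \<Rightarrow> complex mat" and M :: "complex mat"
  assumes CE: "\<And>s (C :: nat \<Rightarrow> complex mat). 0 < s \<Longrightarrow> (\<forall>i<k. C i \<in> carrier_mat s s) \<Longrightarrow> (\<forall>i<k. \<forall>j<k. C i * C j = C j * C i)
       \<Longrightarrow> \<exists>x\<in>carrier_vec s. x \<noteq> 0\<^sub>v s \<and> (\<forall>i<k. \<exists>c. C i *\<^sub>v x = c \<cdot>\<^sub>v x)"
    and M: "M \<in> carrier_mat r m"
    and A: "\<And>i. i < k \<Longrightarrow> A i \<in> carrier_mat m m"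
    and comm: "\<And>i j. i < k \<Longrightarrow> j < k \<Longrightarrow> A i * A j = A j * A i"
    and inv: "\<And>i v. i < k \<Longrightarrow> v \<in> carrier_vec m \<Longrightarrow> M *\<^sub>v v = 0\<^sub>v r \<Longrightarrow> M *\<^sub>v (A i *\<^sub>v v) = 0\<^sub>v r"
    and w: "w \<in> carrier_vec m" and w0: "w \<noteq> 0\<^sub>v m" and Mw: "M *\<^sub>v w = 0\<^sub>v r"
  shows "\<exists>v\<in>carrier_vec m. v \<noteq> 0\<^sub>v m \<and> M *\<^sub>v v = 0\<^sub>v r \<and> (\<forall>i<k. \<exists>c. A i *\<^sub>v v = c \<cdot>\<^sub>v v)"
proof -
  obtain s P L where P: "P \<in> carrier_mat m s" and L: "L \<in> carrier_mat s m" and LP: "L * P = 1\<^sub>m s"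
    and MP: "\<forall>c\<in>carrier_vec s. M *\<^sub>v (P *\<^sub>v c) = 0\<^sub>v r"
    and proj: "\<forall>v\<in>carrier_vec m. M *\<^sub>v v = 0\<^sub>v r \<longrightarrow> P *\<^sub>v (L *\<^sub>v v) = v"
    using kb[OF M] by blast
  have s0: "0 < s"
  proof (rule ccontr)
    assume "\<not> 0 < s" hence s: "s = 0" by simp
    have "P *\<^sub>v (L *\<^sub>v w) = 0\<^sub>v m"
      by (rule eq_vecI, insert P L s, auto simp: scalar_prod_def)
    with proj w Mw w0 show False by simp
  qed
  have LPc: "L *\<^sub>v (P *\<^sub>v c) = c" if c: "c \<in> carrier_vec s" for c
    using assoc_mult_mat_vec[OF L P c] LP c by simp
  define C where "C i = L * A i * P" for i
  have C: "C i \<in> carrier_mat s s" if i: "i < k" for i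
    unfolding C_def using L A[OF i] P by simp
  have AP: "A i *\<^sub>v (P *\<^sub>v c) = P *\<^sub>v (C i *\<^sub>v c)" if i: "i < k" and c: "c \<in> carrier_vec s" for i c
  proof -
    have Pc: "P *\<^sub>v c \<in> carrier_vec m" using P c by simp
    have APc: "A i *\<^sub>v (P *\<^sub>v c) \<in> carrier_vec m" using A[OF i] Pc by simp
    have "C i *\<^sub>v c = L *\<^sub>v (A i *\<^sub>v (P *\<^sub>v c))"
      unfolding C_def using assoc_mult_mat_vec[OF mult_carrier_mat[OF L A[OF i]] P c]
        assoc_mult_mat_vec[OF L A[OF i] Pc] by simp
    hence "P *\<^sub>v (C i *\<^sub>v c) = P *\<^sub>v (L *\<^sub>v (A i *\<^sub>v (P *\<^sub>v c)))" by simp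
    also have "\<dots> = A i *\<^sub>v (P *\<^sub>v c)"
      using proj APc inv[OF i Pc] MP c by simp
    finally show ?thesis by simp
  qed
  have Ccomm: "\<forall>i<k. \<forall>j<k. C i * C j = C j * C i"
  proof (intro allI impI)
    fix i j assume i: "i < k" and j: "j < k"
    have e: "(C i * C j) *\<^sub>v c = L *\<^sub>v (A i *\<^sub>v (A j *\<^sub>v (P *\<^sub>v c)))"
      if i: "i < k" and j: "j < k" and c: "c \<in> carrier_vec s" for i j c
    proof -
      have Cjc: "C j *\<^sub>v c \<in> carrier_vec s" using C[OF j] c by simp
      have "(C i * C j) *\<^sub>v c = C i *\<^sub>v (C j *\<^sub>v c)" using assoc_mult_mat_vec[OF C[OF i] C[OF j] c] .
      also have "\<dots> = L *\<^sub>v (P *\<^sub>v (C i *\<^sub>v (C j *\<^sub>v c)))"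
        using LPc C[OF i] Cjc by simp
      also have "P *\<^sub>v (C i *\<^sub>v (C j *\<^sub>v c)) = A i *\<^sub>v (P *\<^sub>v (C j *\<^sub>v c))" using AP[OF i Cjc] by simp
      also have "\<dots> = A i *\<^sub>v (A j *\<^sub>v (P *\<^sub>v c))" using AP[OF j c] by simp
      finally show ?thesis .
    qed
    show "C i * C j = C j * C i"
    proof (rule mat_eq_vec)
      show "C i * C j \<in> carrier_mat s s" using mult_carrier_mat[OF C[OF i] C[OF j]] .
      show "C j * C i \<in> carrier_mat s s" using mult_carrier_mat[OF C[OF j] C[OF i]] .
      fix c :: "complex vec" assume c: "c \<in> carrier_vec s"
      have Pc: "P *\<^sub>v c \<in> carrier_vec m" using P c by simp
      have "A i *\<^sub>v (A j *\<^sub>v (P *\<^sub>v c)) = A j *\<^sub>v (A i *\<^sub>v (P *\<^sub>v c))"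
        using assoc_mult_mat_vec[OF A[OF i] A[OF j] Pc] assoc_mult_mat_vec[OF A[OF j] A[OF i] Pc] comm[OF i j]
        by simp
      thus "(C i * C j) *\<^sub>v c = (C j * C i) *\<^sub>v c" using e[OF i j c] e[OF j i c] by simp
    qed
  qed
  obtain x where x: "x \<in> carrier_vec s" and x0: "x \<noteq> 0\<^sub>v s" and ev: "\<forall>i<k. \<exists>c. C i *\<^sub>v x = c \<cdot>\<^sub>v x"
  proof -
    have "\<forall>i<k. C i \<in> carrier_mat s s" using C by blast
    from CE[OF s0 this Ccomm] show ?thesis using that by blast
  qed
  show ?thesis
  proof (intro bexI conjI allI impI)
    show v: "P *\<^sub>v x \<in> carrier_vec m" using P x by simp
    show "M *\<^sub>v (P *\<^sub>v x) = 0\<^sub>v r" using MP x by simp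
    show "P *\<^sub>v x \<noteq> 0\<^sub>v m"
    proof
      assume "P *\<^sub>v x = 0\<^sub>v m"
      moreover have "L *\<^sub>v 0\<^sub>v m = 0\<^sub>v s" by (rule eq_vecI, insert L, auto simp: scalar_prod_def)
      ultimately have "L *\<^sub>v (P *\<^sub>v x) = 0\<^sub>v s" by simp
      with LPc[OF x] x0 show False by simp
    qed
    fix i assume i: "i < k"
    from ev i obtain c where c: "C i *\<^sub>v x = c \<cdot>\<^sub>v x" by blast
    have "A i *\<^sub>v (P *\<^sub>v x) = P *\<^sub>v (c \<cdot>\<^sub>v x)" using AP[OF i x] c by simp
    also have "\<dots> = c \<cdot>\<^sub>v (P *\<^sub>v x)" using mult_mat_vec[OF P x] by simp
    finally show "\<exists>c. A i *\<^sub>v (P *\<^sub>v x) = c \<cdot>\<^sub>v (P *\<^sub>v x)" by blast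
  qed
qed


lemma ce:
  fixes C :: "nat \<Rightarrow> complex mat"
  shows "0 < s \<Longrightarrow> (\<forall>i<k. C i \<in> carrier_mat s s) \<Longrightarrow> (\<forall>i<k. \<forall>j<k. C i * C j = C j * C i)
       \<Longrightarrow> \<exists>x\<in>carrier_vec s. x \<noteq> 0\<^sub>v s \<and> (\<forall>i<k. \<exists>c. C i *\<^sub>v x = c \<cdot>\<^sub>v x)"
proof (induction k arbitrary: s C)
  case 0
  show ?case
  proof (intro bexI conjI)
    show "(unit_vec s 0 :: complex vec) \<in> carrier_vec s" by simp
    show "(unit_vec s 0 :: complex vec) \<noteq> 0\<^sub>v s"
    proof
      assume "unit_vec s 0 = (0\<^sub>v s :: complex vec)"
      hence "unit_vec s 0 $ 0 = (0\<^sub>v s :: complex vec) $ 0" by simp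
      with 0 show False by simp
    qed
  qed simp
next
  case (Suc k)
  define B where "B = C k"
  have B: "B \<in> carrier_mat s s" using Suc.prems B_def by simp
  from spectrum_non_empty[OF B Suc.prems(1)] obtain mu where "eigenvalue B mu"
    unfolding spectrum_def by auto
  then obtain w where w: "w \<in> carrier_vec s" and w0: "w \<noteq> 0\<^sub>v s" and Bw: "B *\<^sub>v w = mu \<cdot>\<^sub>v w"
    unfolding eigenvalue_def eigenvector_def using B by auto
  define M where "M = B - mu \<cdot>\<^sub>m 1\<^sub>m s"
  have M: "M \<in> carrier_mat s s" unfolding M_def using B minus_carrier_mat[OF smult_carrier_mat[OF one_carrier_mat]] by blast
  have Mv: "M *\<^sub>v v = B *\<^sub>v v - mu \<cdot>\<^sub>v v" if v: "v \<in> carrier_vec s" for v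
  proof -
    have "(mu \<cdot>\<^sub>m 1\<^sub>m s) *\<^sub>v v = mu \<cdot>\<^sub>v v"
    proof (rule eq_vecI)
      fix i assume "i < dim_vec (mu \<cdot>\<^sub>v v)" hence i: "i < s" using v by simp
      have "((mu \<cdot>\<^sub>m 1\<^sub>m s) *\<^sub>v v) $ i = (mu \<cdot>\<^sub>v unit_vec s i) \<bullet> v" using i by simp
      also have "\<dots> = mu * (unit_vec s i \<bullet> v)"
        by (rule smult_scalar_prod_distrib[OF _ v], simp)
      also have "\<dots> = (mu \<cdot>\<^sub>v v) $ i" using i v by simp
      finally show "((mu \<cdot>\<^sub>m 1\<^sub>m s) *\<^sub>v v) $ i = (mu \<cdot>\<^sub>v v) $ i" .
    qed (insert v, auto)
    thus ?thesis
      unfolding M_def using minus_mult_distrib_mat_vec[OF B _ v, of "mu \<cdot>\<^sub>m 1\<^sub>m s"] v by simp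
  qed
  have Ck: "\<forall>i<k. C i \<in> carrier_mat s s" "\<forall>i<k. \<forall>j<k. C i * C j = C j * C i"
    using Suc.prems by auto
  have ex: "\<exists>v\<in>carrier_vec s. v \<noteq> 0\<^sub>v s \<and> M *\<^sub>v v = 0\<^sub>v s \<and> (\<forall>i<k. \<exists>c. C i *\<^sub>v v = c \<cdot>\<^sub>v v)"
  proof (rule restrict[OF _ M])
    show "\<And>s (C :: nat \<Rightarrow> complex mat). 0 < s \<Longrightarrow> \<forall>i<k. C i \<in> carrier_mat s s \<Longrightarrow> \<forall>i<k. \<forall>j<k. C i * C j = C j * C i \<Longrightarrow>
      \<exists>x\<in>carrier_vec s. x \<noteq> 0\<^sub>v s \<and> (\<forall>i<k. \<exists>c. C i *\<^sub>v x = c \<cdot>\<^sub>v x)" by (rule Suc.IH)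
    show "\<And>i. i < k \<Longrightarrow> C i \<in> carrier_mat s s" using Ck by auto
    show "\<And>i j. i < k \<Longrightarrow> j < k \<Longrightarrow> C i * C j = C j * C i" using Ck by auto
    show "w \<in> carrier_vec s" "w \<noteq> 0\<^sub>v s" by fact+
    show "M *\<^sub>v w = 0\<^sub>v s" using Mv[OF w] Bw w by simp
    fix i v assume i: "i < k" and v: "v \<in> carrier_vec s" and M0: "M *\<^sub>v v = 0\<^sub>v s"
    have Ci: "C i \<in> carrier_mat s s" using Ck i by auto
    have Bv: "B *\<^sub>v v = mu \<cdot>\<^sub>v v" using vec_minus_zero[of "B *\<^sub>v v" s "mu \<cdot>\<^sub>v v"] M0 Mv[OF v] B v by simp
    have "B *\<^sub>v (C i *\<^sub>v v) = C i *\<^sub>v (B *\<^sub>v v)"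
      using assoc_mult_mat_vec[OF B Ci v] assoc_mult_mat_vec[OF Ci B v] Suc.prems(3) i B_def by simp
    also have "\<dots> = mu \<cdot>\<^sub>v (C i *\<^sub>v v)" using Bv mult_mat_vec[OF Ci v] by simp
    finally have "B *\<^sub>v (C i *\<^sub>v v) = mu \<cdot>\<^sub>v (C i *\<^sub>v v)" .
    thus "M *\<^sub>v (C i *\<^sub>v v) = 0\<^sub>v s" using Mv[of "C i *\<^sub>v v"] Ci v by simp
  qed
  then obtain v where v: "v \<in> carrier_vec s" "v \<noteq> 0\<^sub>v s" and M0: "M *\<^sub>v v = 0\<^sub>v s"
    and evk: "\<forall>i<k. \<exists>c. C i *\<^sub>v v = c \<cdot>\<^sub>v v" by blast
  have "B *\<^sub>v v = mu \<cdot>\<^sub>v v" using vec_minus_zero[of "B *\<^sub>v v" s "mu \<cdot>\<^sub>v v"] M0 Mv[OF v(1)] B v by simp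
  hence "\<forall>i<Suc k. \<exists>c. C i *\<^sub>v v = c \<cdot>\<^sub>v v" using evk B_def less_Suc_eq by auto
  thus ?case using v by blast
qed


lemma trace_comm':
  fixes A B :: "complex mat"
  assumes A: "A \<in> carrier_mat a b" and B: "B \<in> carrier_mat b a"
  shows "(\<Sum>i<a. (A * B) $$ (i,i)) = (\<Sum>j<b. (B * A) $$ (j,j))"
proof -
  have "(\<Sum>i<a. (A * B) $$ (i,i)) = (\<Sum>i<a. \<Sum>j<b. A $$ (i,j) * B $$ (j,i))"
    using A B by (auto simp: scalar_prod_def atLeast0LessThan intro!: sum.cong)
  also have "\<dots> = (\<Sum>j<b. \<Sum>i<a. A $$ (i,j) * B $$ (j,i))" by (rule sum.swap)
  also have "\<dots> = (\<Sum>j<b. (B * A) $$ (j,j))"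
    using A B by (auto simp: scalar_prod_def atLeast0LessThan mult.commute intro!: sum.cong)
  finally show ?thesis .
qed

lemma MU:
  fixes us :: "complex vec list"
  assumes us: "set us \<subseteq> carrier_vec d"
    and on: "\<forall>i<length us. \<forall>j<length us. us ! i \<bullet>c us ! j = (if i = j then 1 else 0)"
  shows "mat_of_rows d (map conjugate us) * mat_of_cols d us = 1\<^sub>m (length us)"
proof (rule eq_matI)
  fix i j assume i: "i < dim_row (1\<^sub>m (length us) :: complex mat)" and j: "j < dim_col (1\<^sub>m (length us) :: complex mat)"
  hence i: "i < length us" and j: "j < length us" by auto
  have ui: "us ! i \<in> carrier_vec d" and uj: "us ! j \<in> carrier_vec d" using us i j by auto
  have "(mat_of_rows d (map conjugate us) * mat_of_cols d us) $$ (i,j) = conjugate (us ! i) \<bullet> us ! j"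
    using i j ui uj by (simp add: mat_of_rows_row)
  also have "\<dots> = us ! j \<bullet>c us ! i" using comm_scalar_prod[of "conjugate (us ! i)" d "us ! j"] ui uj by simp
  also have "\<dots> = 1\<^sub>m (length us) $$ (i,j)" using on i j by auto
  finally show "(mat_of_rows d (map conjugate us) * mat_of_cols d us) $$ (i,j) = 1\<^sub>m (length us) $$ (i,j)" .
qed auto

lemma kernel_nonzero:
  fixes us :: "complex vec list"
  assumes us: "set us \<subseteq> carrier_vec d"
    and on: "\<forall>i<length us. \<forall>j<length us. us ! i \<bullet>c us ! j = (if i = j then 1 else 0)"
    and lt: "length us < d"
  shows "\<exists>w\<in>carrier_vec d. w \<noteq> 0\<^sub>v d \<and> mat_of_rows d (map conjugate us) *\<^sub>v w = 0\<^sub>v (length us)"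
proof (rule ccontr)
  assume nex: "\<not> ?thesis"
  define k where "k = length us"
  define M where "M = mat_of_rows d (map conjugate us)"
  define U where "U = mat_of_cols d us"
  have M: "M \<in> carrier_mat k d" unfolding M_def k_def using mat_of_rows_carrier(1)[of d "map conjugate us"] by simp
  have U: "U \<in> carrier_mat d k" unfolding U_def k_def by simp
  have MU1: "M * U = 1\<^sub>m k" using MU[OF us on] unfolding M_def U_def k_def .
  have UM: "U * M = 1\<^sub>m d"
  proof (rule mat_eq_vec[OF mult_carrier_mat[OF U M] one_carrier_mat])
    fix w :: "complex vec" assume w: "w \<in> carrier_vec d"
    define w' where "w' = w - U *\<^sub>v (M *\<^sub>v w)"
    have Mw: "M *\<^sub>v w \<in> carrier_vec k" using M w by simp
    have w'c: "w' \<in> carrier_vec d" unfolding w'_def using U Mw w by simp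
    have "M *\<^sub>v w' = M *\<^sub>v w - M *\<^sub>v (U *\<^sub>v (M *\<^sub>v w))"
      unfolding w'_def by (rule mult_minus_distrib_mat_vec[OF M w], insert U Mw, simp)
    also have "M *\<^sub>v (U *\<^sub>v (M *\<^sub>v w)) = M *\<^sub>v w"
      using assoc_mult_mat_vec[OF M U Mw] MU1 Mw by simp
    finally have "M *\<^sub>v w' = M *\<^sub>v w - M *\<^sub>v w" .
    also have "\<dots> = 0\<^sub>v k" using Mw by simp
    finally have "w' = 0\<^sub>v d" using nex w'c unfolding M_def k_def by blast
    hence "w = U *\<^sub>v (M *\<^sub>v w)" using vec_minus_zero[OF w _ ] U Mw unfolding w'_def by simp
    thus "(U * M) *\<^sub>v w = 1\<^sub>m d *\<^sub>v w" using assoc_mult_mat_vec[OF U M w] w by simp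
  qed
  have "(\<Sum>i<d. (U * M) $$ (i,i)) = (\<Sum>j<k. (M * U) $$ (j,j))" by (rule trace_comm'[OF U M])
  hence "of_nat d = (of_nat k :: complex)" unfolding UM MU1 by simp
  hence "d = k" by simp
  with lt show False unfolding k_def by simp
qed


lemma build:
  fixes V :: "nat \<Rightarrow> complex mat"
  assumes dims: "\<And>\<alpha>. \<alpha> < n \<Longrightarrow> V \<alpha> \<in> carrier_mat d d"
    and comm: "\<And>\<alpha> \<beta>. \<alpha> < n \<Longrightarrow> \<beta> < n \<Longrightarrow> V \<alpha> * V \<beta> = V \<beta> * V \<alpha>"
    and iso: "\<And>x z. x \<in> carrier_vec d \<Longrightarrow> z \<in> carrier_vec d \<Longrightarrow> (\<Sum>\<beta><n. (V \<beta> *\<^sub>v x) \<bullet>c (V \<beta> *\<^sub>v z)) = x \<bullet>c z"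
  shows "k \<le> d \<Longrightarrow> \<exists>us. length us = k \<and> set us \<subseteq> carrier_vec d
     \<and> (\<forall>i<k. \<forall>j<k. us ! i \<bullet>c us ! j = (if i = j then 1 else 0))
     \<and> (\<forall>u\<in>set us. \<forall>\<alpha><n. \<exists>c. V \<alpha> *\<^sub>v u = c \<cdot>\<^sub>v u)"
proof (induction k)
  case 0
  show ?case by (intro exI[of _ "[]"], auto)
next
  case (Suc k)
  then obtain us where len: "length us = k" and us: "set us \<subseteq> carrier_vec d"
    and on: "\<forall>i<k. \<forall>j<k. us ! i \<bullet>c us ! j = (if i = j then 1 else 0)"
    and ev: "\<forall>u\<in>set us. \<forall>\<alpha><n. \<exists>c. V \<alpha> *\<^sub>v u = c \<cdot>\<^sub>v u" by auto
  have lt: "length us < d" using len Suc.prems by simp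
  have on': "\<forall>i<length us. \<forall>j<length us. us ! i \<bullet>c us ! j = (if i = j then 1 else 0)" using on len by simp
  define M where "M = mat_of_rows d (map conjugate us)"
  have M: "M \<in> carrier_mat k d" unfolding M_def using mat_of_rows_carrier(1)[of d "map conjugate us"] len by simp
  have Mi: "(M *\<^sub>v v) $ i = v \<bullet>c (us ! i)" if v: "v \<in> carrier_vec d" and i: "i < k" for v i
  proof -
    have ui: "us ! i \<in> carrier_vec d" using us i len by auto
    have "(M *\<^sub>v v) $ i = conjugate (us ! i) \<bullet> v" using M i ui unfolding M_def
      by (simp add: mat_of_rows_row len)
    also have "\<dots> = v \<bullet>c (us ! i)" using comm_scalar_prod[of "conjugate (us ! i)" d v] ui v by simp
    finally show ?thesis .
  qed
  have M0: "M *\<^sub>v v = 0\<^sub>v k \<longleftrightarrow> (\<forall>i<k. v \<bullet>c (us ! i) = 0)" if v: "v \<in> carrier_vec d" for v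
  proof
    assume "M *\<^sub>v v = 0\<^sub>v k"
    thus "\<forall>i<k. v \<bullet>c (us ! i) = 0" using Mi[OF v] by (metis index_zero_vec(1))
  next
    assume "\<forall>i<k. v \<bullet>c (us ! i) = 0"
    thus "M *\<^sub>v v = 0\<^sub>v k" using Mi[OF v] M by (intro eq_vecI, auto)
  qed
  obtain w where w: "w \<in> carrier_vec d" "w \<noteq> 0\<^sub>v d" "M *\<^sub>v w = 0\<^sub>v k"
    using kernel_nonzero[OF us on' lt] unfolding M_def len by blast
  have inv: "M *\<^sub>v (V \<alpha> *\<^sub>v v) = 0\<^sub>v k"
    if a: "\<alpha> < n" and v: "v \<in> carrier_vec d" and Mv: "M *\<^sub>v v = 0\<^sub>v k" for \<alpha> v
  proof -
    have Va: "V \<alpha> \<in> carrier_mat d d" using dims[OF a] .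
    have Vv: "V \<alpha> *\<^sub>v v \<in> carrier_vec d" using Va v by simp
    show ?thesis unfolding M0[OF Vv]
    proof (intro allI impI)
      fix i assume i: "i < k"
      have ui: "us ! i \<in> carrier_vec d" using us i len by auto
      have uin: "us ! i \<in> set us" using i len by simp
      obtain lam where lam: "\<And>\<beta>. \<beta> < n \<Longrightarrow> V \<beta> *\<^sub>v (us ! i) = lam \<beta> \<cdot>\<^sub>v (us ! i)"
        using ev uin by metis
      have ui0: "us ! i \<noteq> 0\<^sub>v d"
      proof
        assume "us ! i = 0\<^sub>v d"
        hence "us ! i \<bullet>c us ! i = 0" by simp
        with on i show False by simp
      qed
      have adj: "mat_adjoint (V \<alpha>) *\<^sub>v (us ! i) = cnj (lam \<alpha>) \<cdot>\<^sub>v (us ! i)"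
        by (rule key[OF dims comm iso ui ui0 lam a])
      have "(V \<alpha> *\<^sub>v v) \<bullet>c (us ! i) = v \<bullet>c (cnj (lam \<alpha>) \<cdot>\<^sub>v (us ! i))"
        using adj_ip[OF Va v ui] adj by simp
      also have "\<dots> = lam \<alpha> * (v \<bullet>c (us ! i))" using ip_smult_r[OF v ui] by simp
      also have "v \<bullet>c (us ! i) = 0" using M0[OF v] Mv i by simp
      finally show "(V \<alpha> *\<^sub>v v) \<bullet>c (us ! i) = 0" by simp
    qed
  qed
  have CE: "\<And>s (C :: nat \<Rightarrow> complex mat). 0 < s \<Longrightarrow> \<forall>i<n. C i \<in> carrier_mat s s \<Longrightarrow> \<forall>i<n. \<forall>j<n. C i * C j = C j * C i \<Longrightarrow>
      \<exists>x\<in>carrier_vec s. x \<noteq> 0\<^sub>v s \<and> (\<forall>i<n. \<exists>c. C i *\<^sub>v x = c \<cdot>\<^sub>v x)" by (rule ce)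
  obtain v where v: "v \<in> carrier_vec d" and v0: "v \<noteq> 0\<^sub>v d" and Mv: "M *\<^sub>v v = 0\<^sub>v k"
    and evv: "\<forall>\<alpha><n. \<exists>c. V \<alpha> *\<^sub>v v = c \<cdot>\<^sub>v v"
  proof -
    have "\<exists>v\<in>carrier_vec d. v \<noteq> 0\<^sub>v d \<and> M *\<^sub>v v = 0\<^sub>v k \<and> (\<forall>i<n. \<exists>c. V i *\<^sub>v v = c \<cdot>\<^sub>v v)"
    proof (rule restrict)
      show "\<And>s (C :: nat \<Rightarrow> complex mat). 0 < s \<Longrightarrow> \<forall>i<n. C i \<in> carrier_mat s s \<Longrightarrow> \<forall>i<n. \<forall>j<n. C i * C j = C j * C i \<Longrightarrow>
        \<exists>x\<in>carrier_vec s. x \<noteq> 0\<^sub>v s \<and> (\<forall>i<n. \<exists>c. C i *\<^sub>v x = c \<cdot>\<^sub>v x)" by (rule ce)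
      show "M \<in> carrier_mat k d" by (rule M)
      show "w \<in> carrier_vec d" "w \<noteq> 0\<^sub>v d" "M *\<^sub>v w = 0\<^sub>v k" by (rule w)+
      show "\<And>i. i < n \<Longrightarrow> V i \<in> carrier_mat d d" by (rule dims)
      show "\<And>i j. i < n \<Longrightarrow> j < n \<Longrightarrow> V i * V j = V j * V i" by (rule comm)
      show "\<And>i v. i < n \<Longrightarrow> v \<in> carrier_vec d \<Longrightarrow> M *\<^sub>v v = 0\<^sub>v k \<Longrightarrow> M *\<^sub>v (V i *\<^sub>v v) = 0\<^sub>v k"
        by (rule inv)
    qed
    thus ?thesis using that by blast
  qed
  define N where "N = Re (v \<bullet>c v)"
  have vpos: "v \<bullet>c v > 0" using v v0 by simp
  hence vvN: "v \<bullet>c v = complex_of_real N" and N: "N > 0" unfolding N_def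
    by (auto simp: less_complex_def complex_eq_iff)
  define c where "c = complex_of_real (1 / sqrt N)"
  define u where "u = c \<cdot>\<^sub>v v"
  have u: "u \<in> carrier_vec d" unfolding u_def using v by simp
  have uu: "u \<bullet>c u = 1"
  proof -
    have "u \<bullet>c u = c * (cnj c * (v \<bullet>c v))" unfolding u_def
      using ip_smult_l[OF v, of "c \<cdot>\<^sub>v v"] ip_smult_r[OF v v] v by simp
    also have "cnj c = c" by (simp add: c_def)
    also have "c * (c * (v \<bullet>c v)) = complex_of_real ((1 / sqrt N) * ((1 / sqrt N) * N))"
      unfolding c_def vvN by (simp only: of_real_mult)
    also have "(1 / sqrt N) * ((1 / sqrt N) * N) = N / (sqrt N * sqrt N)" by simp
    also have "sqrt N * sqrt N = N" using N by simp
    also have "N / N = 1" using N by simp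
    finally show ?thesis by simp
  qed
  have ui_orth: "u \<bullet>c (us ! i) = 0" if i: "i < k" for i
  proof -
    have ui: "us ! i \<in> carrier_vec d" using us i len by auto
    have "u \<bullet>c (us ! i) = c * (v \<bullet>c (us ! i))" unfolding u_def using ip_smult_l[OF v ui] .
    also have "v \<bullet>c (us ! i) = 0" using M0[OF v] Mv i by simp
    finally show ?thesis by simp
  qed
  have iu_orth: "(us ! i) \<bullet>c u = 0" if i: "i < k" for i
  proof -
    have ui: "us ! i \<in> carrier_vec d" using us i len by auto
    have "(us ! i) \<bullet>c u = cnj (u \<bullet>c (us ! i))" using ip_cnj[OF u ui] by simp
    thus ?thesis using ui_orth[OF i] by simp
  qed
  have evu: "\<forall>\<alpha><n. \<exists>c'. V \<alpha> *\<^sub>v u = c' \<cdot>\<^sub>v u"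
  proof (intro allI impI)
    fix \<alpha> assume a: "\<alpha> < n"
    then obtain l where l: "V \<alpha> *\<^sub>v v = l \<cdot>\<^sub>v v" using evv by blast
    have "V \<alpha> *\<^sub>v u = c \<cdot>\<^sub>v (l \<cdot>\<^sub>v v)" unfolding u_def using mult_mat_vec[OF dims[OF a] v] l by simp
    also have "\<dots> = l \<cdot>\<^sub>v u" unfolding u_def by (simp add: smult_smult_assoc mult.commute)
    finally show "\<exists>c'. V \<alpha> *\<^sub>v u = c' \<cdot>\<^sub>v u" by blast
  qed
  show ?case
  proof (intro exI[of _ "us @ [u]"] conjI)
    show "length (us @ [u]) = Suc k" using len by simp
    show "set (us @ [u]) \<subseteq> carrier_vec d" using us u by simp
    show "\<forall>u\<in>set (us @ [u]). \<forall>\<alpha><n. \<exists>c. V \<alpha> *\<^sub>v u = c \<cdot>\<^sub>v u" using ev evu by auto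
    show "\<forall>i<Suc k. \<forall>j<Suc k. (us @ [u]) ! i \<bullet>c (us @ [u]) ! j = (if i = j then 1 else 0)"
    proof (intro allI impI)
      fix i j assume i: "i < Suc k" and j: "j < Suc k"
      show "(us @ [u]) ! i \<bullet>c (us @ [u]) ! j = (if i = j then 1 else 0)"
      proof (cases "i < k")
        case True
        then show ?thesis
        proof (cases "j < k")
          case True
          then show ?thesis using \<open>i < k\<close> on len by (simp add: nth_append)
        next
          case False
          hence "j = k" using j by simp
          then show ?thesis using \<open>i < k\<close> iu_orth len by (simp add: nth_append)
        qed
      next
        case False
        hence ik: "i = k" using i by simp
        then show ?thesis
        proof (cases "j < k")
          case True
          then show ?thesis using ik ui_orth len by (simp add: nth_append)
        next
          case False
          hence "j = k" using j by simp
          then show ?thesis using ik uu len by (simp add: nth_append)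
        qed
      qed
    qed
  qed
qed


theorem theorem1:
  fixes d n :: nat and V :: "nat \<Rightarrow> complex mat"
  assumes dims: "\<And>\<alpha>. \<alpha> < n \<Longrightarrow> V \<alpha> \<in> carrier_mat d d"
    and comm: "\<And>\<alpha> \<beta>. \<alpha> < n \<Longrightarrow> \<beta> < n \<Longrightarrow> V \<alpha> * V \<beta> = V \<beta> * V \<alpha>"
    and sum_id: "mat_sum d (\<lambda>\<alpha>. mat_adjoint (V \<alpha>) * V \<alpha>) n = 1\<^sub>m d"
  shows "(\<forall>\<alpha><n. V \<alpha> * mat_adjoint (V \<alpha>) = mat_adjoint (V \<alpha>) * V \<alpha>)
    \<and> (\<exists>us. orthonormal_basis d us \<and> (\<forall>u\<in>set us. \<forall>\<alpha><n. is_eigenvector (V \<alpha>) u))"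
proof -
  have iso': "\<And>x z. x \<in> carrier_vec d \<Longrightarrow> z \<in> carrier_vec d \<Longrightarrow> (\<Sum>\<beta><n. (V \<beta> *\<^sub>v x) \<bullet>c (V \<beta> *\<^sub>v z)) = x \<bullet>c z"
    by (rule iso[OF dims sum_id])
  obtain us where len: "length us = d" and us: "set us \<subseteq> carrier_vec d"
    and on: "\<forall>i<d. \<forall>j<d. us ! i \<bullet>c us ! j = (if i = j then 1 else 0)"
    and ev: "\<forall>u\<in>set us. \<forall>\<alpha><n. \<exists>c. V \<alpha> *\<^sub>v u = c \<cdot>\<^sub>v u"
    using build[OF dims comm iso', of d] by auto
  have nz: "u \<noteq> 0\<^sub>v d" if u: "u \<in> set us" for u
  proof
    assume u0: "u = 0\<^sub>v d"
    from u obtain i where i: "i < d" and ui: "u = us ! i" using len by (metis in_set_conv_nth)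
    have "us ! i \<bullet>c us ! i = 1" using on i by simp
    with u0 ui show False by simp
  qed
  have adj: "mat_adjoint (V \<alpha>) *\<^sub>v u = cnj l \<cdot>\<^sub>v u"
    if u: "u \<in> set us" and a: "\<alpha> < n" and l: "V \<alpha> *\<^sub>v u = l \<cdot>\<^sub>v u" for u \<alpha> l
  proof -
    obtain lam where lam: "\<And>\<beta>. \<beta> < n \<Longrightarrow> V \<beta> *\<^sub>v u = lam \<beta> \<cdot>\<^sub>v u" using ev u by metis
    have uc: "u \<in> carrier_vec d" using u us by auto
    have "lam \<alpha> = l"
    proof -
      have "lam \<alpha> \<cdot>\<^sub>v u = l \<cdot>\<^sub>v u" using lam[OF a] l by simp
      hence "(lam \<alpha> \<cdot>\<^sub>v u) \<bullet>c u = (l \<cdot>\<^sub>v u) \<bullet>c u" by simp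
      hence "lam \<alpha> * (u \<bullet>c u) = l * (u \<bullet>c u)" using ip_smult_l[OF uc uc] by simp
      moreover have "u \<bullet>c u \<noteq> 0" using nz[OF u] uc by simp
      ultimately show ?thesis by simp
    qed
    with key[OF dims comm iso' uc nz[OF u] lam a] show ?thesis by simp
  qed
  have normal: "V \<alpha> * mat_adjoint (V \<alpha>) = mat_adjoint (V \<alpha>) * V \<alpha>" if a: "\<alpha> < n" for \<alpha>
  proof -
    have Va: "V \<alpha> \<in> carrier_mat d d" using dims[OF a] .
    have Aa: "mat_adjoint (V \<alpha>) \<in> carrier_mat d d" using adj_carrier[OF Va] .
    define X where "X = V \<alpha> * mat_adjoint (V \<alpha>)"
    define Y where "Y = mat_adjoint (V \<alpha>) * V \<alpha>"
    have X: "X \<in> carrier_mat d d" unfolding X_def using Va Aa by simp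
    have Y: "Y \<in> carrier_mat d d" unfolding Y_def using Va Aa by simp
    define U where "U = mat_of_cols d us"
    define Mt where "Mt = mat_of_rows d (map conjugate us)"
    have U: "U \<in> carrier_mat d d" unfolding U_def using mat_of_cols_carrier(1)[of d us] len by simp
    have Mt: "Mt \<in> carrier_mat d d" unfolding Mt_def using mat_of_rows_carrier(1)[of d "map conjugate us"] len by simp
    have "Mt * U = 1\<^sub>m d" using MU[OF us] on len unfolding Mt_def U_def by simp
    hence UM: "U * Mt = 1\<^sub>m d" by (rule mat_mult_left_right_inverse[OF Mt U])
    have XYv: "X *\<^sub>v u = Y *\<^sub>v u" if u: "u \<in> set us" for u
    proof -
      have uc: "u \<in> carrier_vec d" using u us by auto
      obtain l where l: "V \<alpha> *\<^sub>v u = l \<cdot>\<^sub>v u" using ev u a by blast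
      have ad: "mat_adjoint (V \<alpha>) *\<^sub>v u = cnj l \<cdot>\<^sub>v u" by (rule adj[OF u a l])
      have "X *\<^sub>v u = V \<alpha> *\<^sub>v (cnj l \<cdot>\<^sub>v u)" unfolding X_def using assoc_mult_mat_vec[OF Va Aa uc] ad by simp
      also have "\<dots> = cnj l \<cdot>\<^sub>v (l \<cdot>\<^sub>v u)" using mult_mat_vec[OF Va uc] l by simp
      also have "\<dots> = l \<cdot>\<^sub>v (cnj l \<cdot>\<^sub>v u)" by (simp add: smult_smult_assoc mult.commute)
      also have "\<dots> = mat_adjoint (V \<alpha>) *\<^sub>v (l \<cdot>\<^sub>v u)" using mult_mat_vec[OF Aa uc] ad by simp
      also have "\<dots> = Y *\<^sub>v u" unfolding Y_def using assoc_mult_mat_vec[OF Aa Va uc] l by simp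
      finally show ?thesis .
    qed
    have XU: "X * U = Y * U"
    proof (rule eq_matI)
      fix i j assume i: "i < dim_row (Y * U)" and j: "j < dim_col (Y * U)"
      hence i: "i < d" and j: "j < d" using Y U by auto
      have uj: "us ! j \<in> set us" using j len by simp
      have ujc: "us ! j \<in> carrier_vec d" using uj us by auto
      have cU: "col U j = us ! j" unfolding U_def using j len ujc by simp
      have "(X * U) $$ (i,j) = (X *\<^sub>v (us ! j)) $ i" using X U i j cU by simp
      also have "\<dots> = (Y *\<^sub>v (us ! j)) $ i" using XYv[OF uj] by simp
      also have "\<dots> = (Y * U) $$ (i,j)" using Y U i j cU by simp
      finally show "(X * U) $$ (i,j) = (Y * U) $$ (i,j)" .
    qed (insert X Y U, auto)
    have "X = X * (U * Mt)" unfolding UM using X by simp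
    also have "\<dots> = (X * U) * Mt" using assoc_mult_mat[OF X U Mt] by simp
    also have "\<dots> = (Y * U) * Mt" unfolding XU ..
    also have "\<dots> = Y * (U * Mt)" using assoc_mult_mat[OF Y U Mt] by simp
    also have "\<dots> = Y" unfolding UM using Y by simp
    finally show ?thesis unfolding X_def Y_def .
  qed
  have onb: "orthonormal_basis d us" unfolding orthonormal_basis_def using len us on by auto
  have eig: "\<forall>u\<in>set us. \<forall>\<alpha><n. is_eigenvector (V \<alpha>) u"
  proof (intro ballI allI impI)
    fix u \<alpha> assume u: "u \<in> set us" and a: "\<alpha> < n"
    have "dim_vec u = d" using u us by auto
    thus "is_eigenvector (V \<alpha>) u" unfolding is_eigenvector_def using nz[OF u] ev u a by auto
  qed
  show ?thesis using normal onb eig by blast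
qed

end
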